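(* Fix a replacement rule $\{p_{(R,\alpha)}(\mathbf{x})\}_{(R,\alpha)}$ satisfying the Fixation Axiom and a mutational bias $\nu\in(0,1)$. Then for each state $\mathbf{x}\in\{0,1\}^G$, $\lim_{u\to0}\pi_{\mathrm{MSS}}(\mathbf{x})$ exists and $$\lim_{u\to0}\pi_{\mathrm{MSS}}(\mathbf{x})=\begin{cases}\dfrac{\nu b(\mathbf{a})\rho_A}{\nu b(\mathbf{a})\rho_A+(1-\nu)b(\mathbf{A})\rho_a} & \mathbf{x}=\mathbf{A},\\[3mm] \dfrac{(1-\nu)b(\mathbf{A})\rho_a}{\nu b(\mathbf{a})\rho_A+(1-\nu)b(\mathbf{A})\rho_a} & \mathbf{x}=\mathbf{a},\\[3mm] 0 & \mathbf{x}\notin\{\mathbf{a},\mathbf{A}\},\end{cases}$$ where $\rho_A,\rho_a$ are the fixation probabilities for this replacement rule at $u=0$.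
   Context: Setting. $G$ is a finite nonempty set of genetic sites, $n=|G|$. A state is $\mathbf{x}\in\{0,1\}^G$ ($x_g=1$: allele $A$ at site $g$; $0$: allele $a$). For $S\subseteq G$, $\mathbf{1}_S$ has $x_g=1$ iff $g\in S$; $\mathbf{a}=\mathbf{1}_\emptyset$, $\mathbf{A}=\mathbf{1}_G$. A replacement event is $(R,\alpha)$ with $R\subseteq G$, $\alpha:R\to G$; a replacement rule gives for each state a probability distribution $\{p_{(R,\alpha)}(\mathbf{x})\}$ over events. With mutation probability $u\in[0,1]$ and bias $\nu\in(0,1)$, the evolutionary Markov chain moves from $\mathbf{x}$: draw $(R,\alpha)$ with probability $p_{(R,\alpha)}(\mathbf{x})$; independently for $g\in R$, $x'_g=x_{\alpha(g)}$ w.p. $1-u$, $x'_g=1$ w.p. $u\nu$, $x'_g=0$ w.p. $u(1-\nu)$; $x'_g=x_g$ for $g\notin R$. $P^{(t)}_{\mathbf{x}\to\mathbf{y}}$ denotes $t$-step transition probabilities. Fixation Axiom: there exist $g\in G$, $m\ge1$, events $(R_k,\alpha_k)_{k=1}^m$ with $p_{(R_k,\alpha_k)}(\mathbf{x})>0$ for all $k,\mathbf{x}$, $g\in R_k$ for some $k$, and $\tilde\alpha_1\circ\cdots\circ\tilde\alpha_m(h)=g$ for all $h\in G$, where $\tilde\alpha_k$ equals $\alpha_k$ on $R_k$ and the identity elsewhere. Quantities: $e_{gh}(\mathbf{x})=\sum_{(R,\alpha):h\in R,\alpha(h)=g}p_{(R,\alpha)}(\mathbf{x})$, $b_g=\sum_h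 e_{gh}$, $d_g=\sum_h e_{hg}$, $b=\sum_gb_g$. At $u=0$, $\mathbf{a},\mathbf{A}$ are absorbing and absorption occurs a.s. Mutant appearance distributions: $\mu_A(\mathbf{1}_{\{g\}})=d_g(\mathbf{a})/b(\mathbf{a})$ (zero on other states), $\mu_a(\mathbf{1}_{G\setminus\{g\}})=d_g(\mathbf{A})/b(\mathbf{A})$ (zero elsewhere); $\rho_A=\sum_\mathbf{x}\mu_A(\mathbf{x})\lim_{t\to\infty}P^{(t)}_{\mathbf{x}\to\mathbf{A}}$, $\rho_a=\sum_\mathbf{x}\mu_a(\mathbf{x})\lim_{t\to\infty}P^{(t)}_{\mathbf{x}\to\mathbf{a}}$, both computed at $u=0$. For $u>0$ the chain has a unique stationary distribution $\pi_{\mathrm{MSS}}$ (mutation–selection stationary distribution). *)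

theory Defs
  imports Complex_Main
begin

text \<open>Sites are the elements of a finite (nonempty) type 'g; G = UNIV.
A state x in {0,1}^G is represented by the set of sites carrying allele A.
A replacement event (R, alpha) with alpha : R -> G is represented by a partial
map E :: 'g => 'g option with R = dom E and alpha g = the (E g).\<close>

type_synonym 'g state = "'g set"
type_synonym 'g event = "'g \<Rightarrow> 'g option"

definition replacement_rule :: "('g::finite state \<Rightarrow> 'g event \<Rightarrow> real) \<Rightarrow> bool" where
  "replacement_rule p \<longleftrightarrow> (\<forall>x E. 0 \<le> p x E) \<and> (\<forall>x. (\<Sum>E\<in>UNIV. p x E) = 1)"

definition ext_map :: "'g event \<Rightarrow> 'g \<Rightarrow> 'g" where
  "ext_map E h = (case E h of Some g \<Rightarrow> g | None \<Rightarrow> h)"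

definition fixation_axiom :: "('g::finite state \<Rightarrow> 'g event \<Rightarrow> real) \<Rightarrow> bool" where
  "fixation_axiom p \<longleftrightarrow> (\<exists>g Es. Es \<noteq> [] \<and>
      (\<forall>k<length Es. \<forall>x. 0 < p x (Es ! k)) \<and>
      (\<exists>k<length Es. g \<in> dom (Es ! k)) \<and>
      (\<forall>h. foldr (\<lambda>E f. ext_map E \<circ> f) Es id h = g))"

definition site_prob :: "real \<Rightarrow> real \<Rightarrow> bool \<Rightarrow> bool \<Rightarrow> real" where
  "site_prob u \<nu> parent new =
     (1 - u) * (if new = parent then 1 else 0) + (if new then u * \<nu> else u * (1 - \<nu>))"

definition trans_prob :: "('g::finite state \<Rightarrow> 'g event \<Rightarrow> real) \<Rightarrow> real \<Rightarrow> real \<Rightarrow> 'g state \<Rightarrow> 'g state \<Rightarrow> real" where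
  "trans_prob p u \<nu> x y = (\<Sum>E\<in>UNIV. p x E *
      (if (\<forall>g. E g = None \<longrightarrow> (g \<in> y \<longleftrightarrow> g \<in> x))
       then (\<Prod>g\<in>dom E. site_prob u \<nu> (the (E g) \<in> x) (g \<in> y)) else 0))"

fun trans_pow :: "('g::finite state \<Rightarrow> 'g event \<Rightarrow> real) \<Rightarrow> real \<Rightarrow> real \<Rightarrow> nat \<Rightarrow> 'g state \<Rightarrow> 'g state \<Rightarrow> real" where
  "trans_pow p u \<nu> 0 x y = (if x = y then 1 else 0)"
| "trans_pow p u \<nu> (Suc t) x y = (\<Sum>z\<in>UNIV. trans_pow p u \<nu> t x z * trans_prob p u \<nu> z y)"

definition stationary :: "('g::finite state \<Rightarrow> 'g event \<Rightarrow> real) \<Rightarrow> real \<Rightarrow> real \<Rightarrow> ('g state \<Rightarrow> real) \<Rightarrow> bool" where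
  "stationary p u \<nu> \<pi> \<longleftrightarrow> (\<forall>x. 0 \<le> \<pi> x) \<and> (\<Sum>x\<in>UNIV. \<pi> x) = 1 \<and>
      (\<forall>y. \<pi> y = (\<Sum>x\<in>UNIV. \<pi> x * trans_prob p u \<nu> x y))"

text \<open>Mutation-selection stationary distribution (unique for u > 0).\<close>
definition pi_MSS :: "('g::finite state \<Rightarrow> 'g event \<Rightarrow> real) \<Rightarrow> real \<Rightarrow> real \<Rightarrow> 'g state \<Rightarrow> real" where
  "pi_MSS p u \<nu> = (THE \<pi>. stationary p u \<nu> \<pi>)"

definition e_rate :: "('g::finite state \<Rightarrow> 'g event \<Rightarrow> real) \<Rightarrow> 'g state \<Rightarrow> 'g \<Rightarrow> 'g \<Rightarrow> real" where
  "e_rate p x g h = (\<Sum>E\<in>{E. E h = Some g}. p x E)"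

definition b_site :: "('g::finite state \<Rightarrow> 'g event \<Rightarrow> real) \<Rightarrow> 'g state \<Rightarrow> 'g \<Rightarrow> real" where
  "b_site p x g = (\<Sum>h\<in>UNIV. e_rate p x g h)"

definition d_site :: "('g::finite state \<Rightarrow> 'g event \<Rightarrow> real) \<Rightarrow> 'g state \<Rightarrow> 'g \<Rightarrow> real" where
  "d_site p x g = (\<Sum>h\<in>UNIV. e_rate p x h g)"

definition b_total :: "('g::finite state \<Rightarrow> 'g event \<Rightarrow> real) \<Rightarrow> 'g state \<Rightarrow> real" where
  "b_total p x = (\<Sum>g\<in>UNIV. b_site p x g)"

text \<open>Absorption probabilities at u = 0 (they do not depend on nu at u = 0).\<close>
definition absorb :: "('g::finite state \<Rightarrow> 'g event \<Rightarrow> real) \<Rightarrow> real \<Rightarrow> 'g state \<Rightarrow> 'g state \<Rightarrow> real" where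
  "absorb p \<nu> x y = lim (\<lambda>t. trans_pow p 0 \<nu> t x y)"

definition rho_A :: "('g::finite state \<Rightarrow> 'g event \<Rightarrow> real) \<Rightarrow> real \<Rightarrow> real" where
  "rho_A p \<nu> = (\<Sum>g\<in>UNIV. d_site p {} g / b_total p {} * absorb p \<nu> {g} UNIV)"

definition rho_a :: "('g::finite state \<Rightarrow> 'g event \<Rightarrow> real) \<Rightarrow> real \<Rightarrow> real" where
  "rho_a p \<nu> = (\<Sum>g\<in>UNIV. d_site p UNIV g / b_total p UNIV * absorb p \<nu> (UNIV - {g}) {})"

end

theory Submission
  imports Defs "HOL-Analysis.Analysis"
begin


lemma sum_agree_prod:
  fixes f :: "'g::finite \<Rightarrow> bool \<Rightarrow> real" and E :: "'g event" and x :: "'g set"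
  shows "(\<Sum>y\<in>UNIV. (if (\<forall>g. E g = None \<longrightarrow> (g \<in> y \<longleftrightarrow> g \<in> x))
            then (\<Prod>g\<in>dom E. f g (g \<in> y)) else 0)) = (\<Prod>g\<in>dom E. f g True + f g False)"
proof -
  define D where "D = dom E"
  have agree: "(\<forall>g. E g = None \<longrightarrow> (g \<in> y \<longleftrightarrow> g \<in> x)) \<longleftrightarrow> y - D = x - D" for y
    unfolding D_def by auto
  have "(\<Sum>y\<in>UNIV. (if (\<forall>g. E g = None \<longrightarrow> (g \<in> y \<longleftrightarrow> g \<in> x))
            then (\<Prod>g\<in>D. f g (g \<in> y)) else 0)) = (\<Sum>y\<in>{y. y - D = x - D}. \<Prod>g\<in>D. f g (g \<in> y))"
    by (simp add: agree sum.If_cases Int_def)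
  also have "\<dots> = (\<Sum>X\<in>Pow D. (\<Prod>g\<in>X. f g True) * (\<Prod>g\<in>D-X. f g False))"
  proof (rule sum.reindex_bij_witness[where i="\<lambda>X. X \<union> (x - D)" and j="\<lambda>y. y \<inter> D"])
    fix y assume y: "y \<in> {y. y - D = x - D}"
    have "(\<Prod>g\<in>D. f g (g \<in> y)) = (\<Prod>g\<in>D \<inter> y. f g (g \<in> y)) * (\<Prod>g\<in>D - y. f g (g \<in> y))"
      by (metis Diff_Diff_Int Diff_disjoint Int_Diff_Un finite inf_commute prod.union_disjoint Int_Diff_disjoint Un_commute)
    also have "\<dots> = (\<Prod>g\<in>y \<inter> D. f g True) * (\<Prod>g\<in>D - y \<inter> D. f g False)"
      by (auto intro!: arg_cong2[where f="(*)"] prod.cong simp: Int_commute)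
    finally show "(\<Prod>g\<in>y \<inter> D. f g True) * (\<Prod>g\<in>D - y \<inter> D. f g False) = (\<Prod>g\<in>D. f g (g \<in> y))" by simp
  qed auto
  also have "\<dots> = (\<Prod>g\<in>D. f g True + f g False)"
    by (rule prod_add[symmetric]) simp
  finally show ?thesis unfolding D_def .
qed

lemma site_prob_bounds:
  assumes "0 \<le> u" "u \<le> 1" "0 \<le> \<nu>" "\<nu> \<le> 1"
  shows "0 \<le> site_prob u \<nu> a b" "site_prob u \<nu> a b \<le> 1"
  using assms unfolding site_prob_def
  by (auto simp: algebra_simps intro: mult_nonneg_nonneg mult_le_one order.trans[OF mult_left_le_one_le])
     (smt (verit, best) mult_left_le_one_le mult_nonneg_nonneg)+

lemma site_prob_sum: "site_prob u \<nu> a True + site_prob u \<nu> a False = 1"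
  unfolding site_prob_def by (auto simp: algebra_simps)

lemma site_prob_lin: "site_prob u \<nu> a b = site_prob 0 \<nu> a b + u * (site_prob 1 \<nu> a b - site_prob 0 \<nu> a b)"
  unfolding site_prob_def by (auto simp: algebra_simps)

lemma tendsto_if_const: "(f \<longlongrightarrow> a) F \<Longrightarrow> ((\<lambda>u. if C then f u else c) \<longlongrightarrow> (if C then a else c)) F"
  by (cases C) auto

locale mchain =
  fixes p :: "'g::finite state \<Rightarrow> 'g event \<Rightarrow> real" and \<nu> :: real
  assumes rr: "replacement_rule p" and nu0: "0 < \<nu>" and nu1: "\<nu> < 1"
begin

abbreviation "P u \<equiv> trans_prob p u \<nu>"
abbreviation "Pt u \<equiv> trans_pow p u \<nu>"

lemma p_nonneg: "0 \<le> p x E" using rr unfolding replacement_rule_def by auto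
lemma p_sum: "(\<Sum>E\<in>UNIV. p x E) = 1" using rr unfolding replacement_rule_def by auto

lemma P_nonneg: assumes "0 \<le> u" "u \<le> 1" shows "0 \<le> P u x y"
  unfolding trans_prob_def
  using assms nu0 nu1 p_nonneg site_prob_bounds
  by (intro sum_nonneg mult_nonneg_nonneg) (auto intro!: prod_nonneg)

lemma P_sum: "(\<Sum>y\<in>UNIV. P u x y) = 1"
proof -
  have "(\<Sum>y\<in>UNIV. P u x y) = (\<Sum>E\<in>UNIV. p x E * (\<Sum>y\<in>UNIV. (if (\<forall>g. E g = None \<longrightarrow> (g \<in> y \<longleftrightarrow> g \<in> x))
       then (\<Prod>g\<in>dom E. site_prob u \<nu> (the (E g) \<in> x) (g \<in> y)) else 0)))"
    unfolding trans_prob_def by (subst sum.swap) (simp add: sum_distrib_left)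
  also have "\<dots> = (\<Sum>E\<in>UNIV. p x E)"
    by (subst sum_agree_prod[where f="\<lambda>g b. site_prob u \<nu> (the (E g) \<in> x) b" for E]) (simp add: site_prob_sum)
  finally show ?thesis by (simp add: p_sum)
qed

lemma P_le1: assumes "0 \<le> u" "u \<le> 1" shows "P u x y \<le> 1"
proof -
  have "P u x y \<le> (\<Sum>y\<in>UNIV. P u x y)"
    by (rule member_le_sum) (auto intro: P_nonneg assms)
  then show ?thesis by (simp add: P_sum)
qed

lemma Pt_nonneg: assumes "0 \<le> u" "u \<le> 1" shows "0 \<le> Pt u t x y"
  by (induction t arbitrary: y) (auto intro!: sum_nonneg mult_nonneg_nonneg P_nonneg assms)

lemma Pt_sum: "(\<Sum>y\<in>UNIV. Pt u t x y) = 1"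
proof (induction t)
  case 0 then show ?case by simp
next
  case (Suc t)
  have "(\<Sum>y\<in>UNIV. Pt u (Suc t) x y) = (\<Sum>z\<in>UNIV. Pt u t x z * (\<Sum>y\<in>UNIV. P u z y))"
    by (simp add: sum_distrib_left) (rule sum.swap)
  then show ?case by (simp add: P_sum Suc)
qed

lemma Pt_le1: assumes "0 \<le> u" "u \<le> 1" shows "Pt u t x y \<le> 1"
proof -
  have "Pt u t x y \<le> (\<Sum>y\<in>UNIV. Pt u t x y)"
    by (rule member_le_sum) (auto intro: Pt_nonneg assms)
  then show ?thesis by (simp add: Pt_sum)
qed

lemma Pt_add: "Pt u (s + t) x y = (\<Sum>z\<in>UNIV. Pt u s x z * Pt u t z y)"
proof (induction t arbitrary: y)
  case 0
  have "(\<Sum>z\<in>UNIV. Pt u s x z * Pt u 0 z y) = (\<Sum>z\<in>UNIV. if z = y then Pt u s x z else 0)"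
    by (intro sum.cong) auto
  then show ?case by simp
next
  case (Suc t)
  have "Pt u (s + Suc t) x y = (\<Sum>w\<in>UNIV. (\<Sum>z\<in>UNIV. Pt u s x z * Pt u t z w) * P u w y)"
    by (simp add: Suc)
  also have "\<dots> = (\<Sum>z\<in>UNIV. Pt u s x z * (\<Sum>w\<in>UNIV. Pt u t z w * P u w y))"
    by (simp add: sum_distrib_left sum_distrib_right mult.assoc) (rule sum.swap)
  finally show ?case by simp
qed

lemma Pt_1: "Pt u 1 x y = P u x y"
proof -
  have "Pt u 1 x y = (\<Sum>z\<in>UNIV. (if x = z then 1 else 0) * P u z y)" by simp
  also have "\<dots> = (\<Sum>z\<in>UNIV. if x = z then P u z y else 0)" by (intro sum.cong) auto
  also have "\<dots> = P u x y" by simp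
  finally show ?thesis .
qed

lemma Pt_Suc_left: "Pt u (Suc t) x y = (\<Sum>z\<in>UNIV. P u x z * Pt u t z y)"
  using Pt_add[of u 1 t x y] by (simp only: Pt_1 plus_1_eq_Suc)

lemma P_event_lb:
  assumes "0 \<le> u" "u \<le> 1" "\<forall>g. E g = None \<longrightarrow> (g \<in> y \<longleftrightarrow> g \<in> x)"
  shows "p x E * (\<Prod>g\<in>dom E. site_prob u \<nu> (the (E g) \<in> x) (g \<in> y)) \<le> P u x y"
proof -
  let ?f = "\<lambda>E. p x E * (if (\<forall>g. E g = None \<longrightarrow> (g \<in> y \<longleftrightarrow> g \<in> x))
       then (\<Prod>g\<in>dom E. site_prob u \<nu> (the (E g) \<in> x) (g \<in> y)) else 0)"
  have "?f E \<le> (\<Sum>E\<in>UNIV. ?f E)"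
    using assms nu0 nu1 p_nonneg site_prob_bounds
    by (intro member_le_sum) (auto intro!: mult_nonneg_nonneg prod_nonneg)
  then show ?thesis using assms(3) unfolding trans_prob_def by simp
qed

definition step :: "'g event \<Rightarrow> 'g state \<Rightarrow> 'g state" where
  "step E x = {h. ext_map E h \<in> x}"

lemma P0_step: "p x E \<le> P 0 x (step E x)"
proof -
  have "p x E * (\<Prod>g\<in>dom E. site_prob 0 \<nu> (the (E g) \<in> x) (g \<in> step E x)) \<le> P 0 x (step E x)"
    by (rule P_event_lb) (auto simp: step_def ext_map_def)
  moreover have "(\<Prod>g\<in>dom E. site_prob 0 \<nu> (the (E g) \<in> x) (g \<in> step E x)) = 1"
    by (intro prod.neutral) (auto simp: step_def ext_map_def site_prob_def)
  ultimately show ?thesis by simp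
qed

lemma Pu_kill:
  assumes "0 \<le> u" "u \<le> 1"
  shows "p x E * (u * (1 - \<nu>)) ^ CARD('g) \<le> P u x (x - dom E)"
proof -
  have c0: "0 \<le> u * (1 - \<nu>)" "u * (1 - \<nu>) \<le> 1" using assms nu0 nu1
    by (auto intro: mult_le_one)
  have "(u * (1 - \<nu>)) ^ CARD('g) \<le> (u * (1 - \<nu>)) ^ card (dom E)"
    using c0 by (intro power_decreasing) (auto simp: card_mono)
  also have "\<dots> = (\<Prod>g\<in>dom E. u * (1 - \<nu>))" by simp
  also have "\<dots> \<le> (\<Prod>g\<in>dom E. site_prob u \<nu> (the (E g) \<in> x) (g \<in> x - dom E))"
    using c0 assms by (intro prod_mono) (auto simp: site_prob_def)
  finally have "p x E * (u * (1 - \<nu>)) ^ CARD('g) \<le> p x E * (\<Prod>g\<in>dom E. site_prob u \<nu> (the (E g) \<in> x) (g \<in> x - dom E))"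
    by (intro mult_left_mono p_nonneg)
  also have "\<dots> \<le> P u x (x - dom E)"
    by (rule P_event_lb) (use assms in auto)
  finally show ?thesis .
qed

fun comp_ev :: "'g event list \<Rightarrow> 'g \<Rightarrow> 'g" where
  "comp_ev [] = id"
| "comp_ev (E # Es) = ext_map E \<circ> comp_ev Es"

lemma comp_ev_foldr: "comp_ev Es = foldr (\<lambda>E f. ext_map E \<circ> f) Es id"
  by (induction Es) auto

lemma Pt0_seq:
  assumes "0 \<le> \<delta>" "\<forall>E\<in>set Es. \<forall>x. \<delta> \<le> p x E"
  shows "\<delta> ^ length Es \<le> Pt 0 (length Es) x {h. comp_ev Es h \<in> x}"
  using assms(2)
proof (induction Es arbitrary: x)
  case Nil then show ?case by simp
next
  case (Cons E Es)
  let ?T = "{h. comp_ev (E # Es) h \<in> x}"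
  have T: "?T = {h. comp_ev Es h \<in> step E x}" by (simp add: step_def)
  have "\<delta> ^ length (E # Es) = \<delta> * \<delta> ^ length Es" by simp
  also have "\<dots> \<le> P 0 x (step E x) * Pt 0 (length Es) (step E x) ?T"
  proof (intro mult_mono)
    show "\<delta> \<le> P 0 x (step E x)" using Cons.prems P0_step[of x E] by (meson list.set_intros(1) order.trans)
    show "\<delta> ^ length Es \<le> Pt 0 (length Es) (step E x) ?T" unfolding T using Cons by auto
  qed (auto intro: P_nonneg assms(1) zero_le_power)
  also have "\<dots> \<le> (\<Sum>z\<in>UNIV. P 0 x z * Pt 0 (length Es) z ?T)"
    by (rule member_le_sum[where f="\<lambda>z. P 0 x z * Pt 0 (length Es) z ?T"]) (auto intro!: mult_nonneg_nonneg P_nonneg Pt_nonneg)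
  also have "\<dots> = Pt 0 (length (E # Es)) x ?T" by (simp del: trans_pow.simps add: Pt_Suc_left)
  finally show ?case .
qed

lemma Ptu_seq:
  assumes "0 \<le> u" "u \<le> 1" "0 \<le> \<delta>" "\<forall>E\<in>set Es. \<forall>x. \<delta> \<le> p x E"
  shows "(\<delta> * (u * (1 - \<nu>)) ^ CARD('g)) ^ length Es \<le> Pt u (length Es) x (x - (\<Union>E\<in>set Es. dom E))"
  using assms(4)
proof (induction Es arbitrary: x)
  case Nil then show ?case by simp
next
  case (Cons E Es)
  let ?c = "\<delta> * (u * (1 - \<nu>)) ^ CARD('g)"
  let ?T = "x - (\<Union>E\<in>set (E # Es). dom E)"
  have T: "?T = (x - dom E) - (\<Union>E\<in>set Es. dom E)" by auto
  have c0: "0 \<le> ?c" using assms nu1 by auto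
  have "?c ^ length (E # Es) = ?c * ?c ^ length Es" by simp
  also have "\<dots> \<le> P u x (x - dom E) * Pt u (length Es) (x - dom E) ?T"
  proof (intro mult_mono)
    have "?c \<le> p x E * (u * (1 - \<nu>)) ^ CARD('g)"
      using Cons.prems assms nu1 by (intro mult_right_mono) auto
    then show "?c \<le> P u x (x - dom E)" using Pu_kill[OF assms(1,2), of x E] by linarith
    show "?c ^ length Es \<le> Pt u (length Es) (x - dom E) ?T" unfolding T using Cons by auto
  qed (auto intro: P_nonneg assms c0 zero_le_power)
  also have "\<dots> \<le> (\<Sum>z\<in>UNIV. P u x z * Pt u (length Es) z ?T)"
    by (rule member_le_sum[where f="\<lambda>z. P u x z * Pt u (length Es) z ?T"]) (auto intro!: mult_nonneg_nonneg P_nonneg Pt_nonneg assms)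
  also have "\<dots> = Pt u (length (E # Es)) x ?T" by (simp del: trans_pow.simps add: Pt_Suc_left)
  finally show ?case .
qed

lemma comp_ev_id: "(\<forall>E\<in>set Es. h \<notin> dom E) \<Longrightarrow> comp_ev Es h = h"
  by (induction Es) (auto simp: ext_map_def domIff)

lemma d_site_pos:
  assumes "E g = Some h" "0 < p x E"
  shows "0 < d_site p x g"
proof -
  have "p x E \<le> (\<Sum>E\<in>{E. E g = Some h}. p x E)"
    using assms by (intro member_le_sum) (auto intro: p_nonneg)
  also have "\<dots> = e_rate p x h g" by (simp add: e_rate_def)
  also have "\<dots> \<le> d_site p x g" unfolding d_site_def e_rate_def
    by (rule member_le_sum[where f="\<lambda>h. \<Sum>E\<in>{E. E g = Some h}. p x E"]) (auto intro!: sum_nonneg p_nonneg)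
  finally show ?thesis using assms by simp
qed

lemma P0_const:
  assumes x: "x = {} \<or> x = UNIV"
  shows "P 0 x y = (if y = x then 1 else 0)"
proof (cases "y = x")
  case True
  have "P 0 x y = (\<Sum>E\<in>UNIV. p x E)" unfolding trans_prob_def
    using x True by (intro sum.cong refl) (auto intro!: prod.neutral simp: site_prob_def)
  then show ?thesis using True p_sum by simp
next
  case False
  then obtain g where g: "(g \<in> y) \<noteq> (g \<in> x)" by auto
  have "P 0 x y = 0" unfolding trans_prob_def
  proof (rule sum.neutral, rule ballI)
    fix E :: "'g event"
    show "p x E * (if (\<forall>g. E g = None \<longrightarrow> (g \<in> y \<longleftrightarrow> g \<in> x))
       then (\<Prod>g\<in>dom E. site_prob 0 \<nu> (the (E g) \<in> x) (g \<in> y)) else 0) = 0"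
    proof (cases "E g = None")
      case True then show ?thesis using g by auto
    next
      case False
      then have "g \<in> dom E" by auto
      moreover have "site_prob 0 \<nu> (the (E g) \<in> x) (g \<in> y) = 0"
        using g x by (auto simp: site_prob_def)
      ultimately have "(\<Prod>g\<in>dom E. site_prob 0 \<nu> (the (E g) \<in> x) (g \<in> y)) = 0"
        by (intro prod_zero) auto
      then show ?thesis by simp
    qed
  qed
  then show ?thesis using False by simp
qed

lemma Pt0_const:
  assumes x: "x = {} \<or> x = UNIV"
  shows "Pt 0 t x y = (if y = x then 1 else 0)"
proof (induction t arbitrary: y)
  case 0 then show ?case by auto
next
  case (Suc t)
  have "Pt 0 (Suc t) x y = (\<Sum>z\<in>UNIV. (if z = x then 1 else 0) * P 0 z y)" by (simp add: Suc)
  also have "\<dots> = (\<Sum>z\<in>UNIV. if z = x then P 0 z y else 0)" by (intro sum.cong) auto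
  also have "\<dots> = P 0 x y" by simp
  finally show ?case using P0_const[OF x] by simp
qed

lemma Pt0_absorb_mono:
  assumes A: "A = {} \<or> A = UNIV"
  shows "Pt 0 t x A \<le> Pt 0 (Suc t) x A"
proof -
  have "Pt 0 t x A * P 0 A A \<le> (\<Sum>z\<in>UNIV. Pt 0 t x z * P 0 z A)"
    by (rule member_le_sum[where f="\<lambda>z. Pt 0 t x z * P 0 z A"]) (auto intro!: mult_nonneg_nonneg P_nonneg Pt_nonneg)
  then show ?thesis using P0_const[OF A, of A] by simp
qed

lemma Pt0_absorb_conv:
  assumes A: "A = {} \<or> A = UNIV"
  shows "(\<lambda>t. Pt 0 t x A) \<longlonglongrightarrow> absorb p \<nu> x A" "\<And>t. Pt 0 t x A \<le> absorb p \<nu> x A"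
proof -
  have inc: "incseq (\<lambda>t. Pt 0 t x A)"
    by (rule incseq_SucI) (rule Pt0_absorb_mono[OF A])
  obtain L where L: "(\<lambda>t. Pt 0 t x A) \<longlonglongrightarrow> L" "\<forall>i. Pt 0 i x A \<le> L"
    using incseq_convergent[OF inc, of 1] Pt_le1[of 0] by auto
  have "absorb p \<nu> x A = L" unfolding absorb_def using L(1) by (rule limI)
  then show "(\<lambda>t. Pt 0 t x A) \<longlonglongrightarrow> absorb p \<nu> x A" "\<And>t. Pt 0 t x A \<le> absorb p \<nu> x A"
    using L by auto
qed

lemma absorb_harm:
  assumes A: "A = {} \<or> A = UNIV"
  shows "absorb p \<nu> x A = (\<Sum>y\<in>UNIV. P 0 x y * absorb p \<nu> y A)"
proof -
  have "(\<lambda>t. Pt 0 (Suc t) x A) \<longlonglongrightarrow> absorb p \<nu> x A"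
    using Pt0_absorb_conv(1)[OF A] by (rule LIMSEQ_Suc)
  moreover have "(\<lambda>t. Pt 0 (Suc t) x A) \<longlonglongrightarrow> (\<Sum>y\<in>UNIV. P 0 x y * absorb p \<nu> y A)"
    unfolding Pt_Suc_left
    by (intro tendsto_sum tendsto_mult tendsto_const Pt0_absorb_conv(1)[OF A])
  ultimately show ?thesis by (rule LIMSEQ_unique)
qed

lemma absorb_const:
  assumes x: "x = {} \<or> x = UNIV" and A: "A = {} \<or> A = UNIV"
  shows "absorb p \<nu> x A = (if A = x then 1 else 0)"
  unfolding absorb_def Pt0_const[OF x] by simp

lemma absorb_nonneg: assumes A: "A = {} \<or> A = UNIV" shows "0 \<le> absorb p \<nu> x A"
  using Pt0_absorb_conv(2)[OF A, of 0 x] by (cases "x = A") auto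

lemma stationary_exists:
  assumes u: "0 \<le> u" "u \<le> 1"
  shows "\<exists>\<pi>. stationary p u \<nu> \<pi>"
proof -
  define f :: "real ^ ('g set) \<Rightarrow> real ^ ('g set)" where
    "f v = (\<chi> y. (\<Sum>x\<in>UNIV. v $ x * P u x y) - v $ y)" for v
  have lin: "linear f"
    by (rule linearI) (auto simp: f_def vec_eq_iff sum.distrib sum_distrib_left algebra_simps)
  have sum0: "(\<Sum>y\<in>UNIV. f v $ y) = 0" for v
  proof -
    have "(\<Sum>y\<in>UNIV. \<Sum>x\<in>UNIV. v $ x * P u x y) = (\<Sum>x\<in>UNIV. v $ x * (\<Sum>y\<in>UNIV. P u x y))"
      by (subst sum.swap) (simp add: sum_distrib_left)
    then show ?thesis by (simp add: f_def sum_subtractf P_sum)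
  qed
  have "\<not> surj f"
  proof
    assume "surj f"
    then obtain v where "f v = (\<chi> y. if y = {} then 1 else 0)" by (metis surjD)
    then have "(\<Sum>y\<in>UNIV. f v $ y) = 1" by simp
    then show False using sum0 by simp
  qed
  then have "\<not> inj f" using linear_injective_imp_surjective[OF lin] by blast
  then obtain v1 v2 where "v1 \<noteq> v2" "f v1 = f v2" unfolding inj_def by blast
  define v where "v = v1 - v2"
  have vne: "v \<noteq> 0" "f v = 0" using \<open>v1 \<noteq> v2\<close> \<open>f v1 = f v2\<close> linear_diff[OF lin] by (auto simp: v_def)
  have vfix: "v $ y = (\<Sum>x\<in>UNIV. v $ x * P u x y)" for y
    using vne(2) by (auto simp: f_def vec_eq_iff)
  define a where "a y = \<bar>v $ y\<bar>" for y
  have le: "a y \<le> (\<Sum>x\<in>UNIV. a x * P u x y)" for y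
  proof -
    have "a y = \<bar>\<Sum>x\<in>UNIV. v $ x * P u x y\<bar>" using vfix[of y] by (simp add: a_def)
    also have "\<dots> \<le> (\<Sum>x\<in>UNIV. \<bar>v $ x * P u x y\<bar>)" by (rule sum_abs)
    also have "\<dots> = (\<Sum>x\<in>UNIV. a x * P u x y)" using P_nonneg[OF u] by (simp add: a_def abs_mult)
    finally show ?thesis .
  qed
  have tot: "(\<Sum>y\<in>UNIV. \<Sum>x\<in>UNIV. a x * P u x y) = (\<Sum>y\<in>UNIV. a y)"
    by (subst sum.swap) (simp add: sum_distrib_left[symmetric] P_sum)
  have eq: "a y = (\<Sum>x\<in>UNIV. a x * P u x y)" for y
  proof -
    have "(\<Sum>y\<in>UNIV. (\<Sum>x\<in>UNIV. a x * P u x y) - a y) = 0"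
      using tot by (simp add: sum_subtractf)
    then have "\<forall>y\<in>UNIV. (\<Sum>x\<in>UNIV. a x * P u x y) - a y = 0"
      using le by (subst sum_nonneg_eq_0_iff[symmetric]) auto
    then show ?thesis by simp
  qed
  obtain y0 where "v $ y0 \<noteq> 0" using vne(1) by (auto simp: vec_eq_iff)
  then have "0 < a y0" by (simp add: a_def)
  moreover have "a y0 \<le> (\<Sum>y\<in>UNIV. a y)" by (rule member_le_sum) (auto simp: a_def)
  ultimately have spos: "0 < (\<Sum>y\<in>UNIV. a y)" by linarith
  define \<pi> where "\<pi> y = a y / (\<Sum>y\<in>UNIV. a y)" for y
  have "stationary p u \<nu> \<pi>"
    unfolding stationary_def
  proof (intro conjI allI)
    show "0 \<le> \<pi> x" for x using spos by (simp add: \<pi>_def a_def)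
    show "(\<Sum>x\<in>UNIV. \<pi> x) = 1" using spos by (simp add: \<pi>_def sum_divide_distrib[symmetric])
    show "\<pi> y = (\<Sum>x\<in>UNIV. \<pi> x * P u x y)" for y
      using eq[of y] by (simp add: \<pi>_def sum_divide_distrib[symmetric])
  qed
  then show ?thesis by blast
qed

lemma stationary_Pt:
  assumes "\<forall>y. w y = (\<Sum>x\<in>UNIV. w x * P u x y)"
  shows "w y = (\<Sum>x\<in>UNIV. w x * Pt u t x y)"
proof (induction t arbitrary: y)
  case 0
  have "(\<Sum>x\<in>UNIV. w x * Pt u 0 x y) = (\<Sum>x\<in>UNIV. if x = y then w x else 0)" by (intro sum.cong) auto
  then show ?case by simp
next
  case (Suc t)
  have "w y = (\<Sum>z\<in>UNIV. w z * P u z y)" using assms by blast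
  also have "\<dots> = (\<Sum>z\<in>UNIV. (\<Sum>x\<in>UNIV. w x * Pt u t x z) * P u z y)"
    by (rule sum.cong[OF refl], subst Suc.IH, rule refl)
  also have "\<dots> = (\<Sum>x\<in>UNIV. w x * Pt u (Suc t) x y)"
    by (simp add: sum_distrib_left sum_distrib_right mult.assoc) (rule sum.swap)
  finally show ?case .
qed

lemma P_tendsto: "((\<lambda>u. P u x y) \<longlongrightarrow> P u0 x y) (at u0 within S)"
  unfolding trans_prob_def
  apply (subst (1 2) site_prob_lin)
  by (intro tendsto_intros tendsto_if_const)

lemma Pt_tendsto: "((\<lambda>u. Pt u t x y) \<longlongrightarrow> Pt u0 t x y) (at u0 within S)"
  by (induction t arbitrary: y) (auto intro!: tendsto_intros P_tendsto)

end

locale fchain = mchain p \<nu> for p :: "'g::finite state \<Rightarrow> 'g event \<Rightarrow> real" and \<nu> +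
  assumes fa: "fixation_axiom p"
begin

lemma fix_data: "\<exists>g Es \<delta>. Es \<noteq> [] \<and> 0 < \<delta> \<and> (\<forall>E\<in>set Es. \<forall>x. \<delta> \<le> p x E) \<and> (\<forall>h. comp_ev Es h = g)
   \<and> (\<Union>E\<in>set Es. dom E) = UNIV \<and> (\<exists>E\<in>set Es. g \<in> dom E) \<and> (\<forall>E\<in>set Es. \<forall>x. 0 < p x E)"
proof -
  obtain g Es where ne: "Es \<noteq> []" and pos: "\<forall>k<length Es. \<forall>x. 0 < p x (Es ! k)"
    and gd: "\<exists>k<length Es. g \<in> dom (Es ! k)" and comp: "\<forall>h. foldr (\<lambda>E f. ext_map E \<circ> f) Es id h = g"
    using fa unfolding fixation_axiom_def by blast
  have pos': "\<forall>E\<in>set Es. \<forall>x. 0 < p x E" using pos by (auto simp: in_set_conv_nth)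
  have comp': "\<forall>h. comp_ev Es h = g" using comp by (simp add: comp_ev_foldr)
  have gd': "\<exists>E\<in>set Es. g \<in> dom E" using gd nth_mem by blast
  have cov: "(\<Union>E\<in>set Es. dom E) = UNIV"
  proof (rule ccontr)
    assume "(\<Union>E\<in>set Es. dom E) \<noteq> UNIV"
    then obtain h where h: "\<forall>E\<in>set Es. h \<notin> dom E" by auto
    then have "comp_ev Es h = h" by (rule comp_ev_id)
    then have "h = g" using comp' by simp
    then show False using h gd' by auto
  qed
  define S where "S = (\<lambda>(x, E). p x E) ` (UNIV \<times> set Es)"
  have Sfin: "finite S" "S \<noteq> {}" using ne by (auto simp: S_def)
  define \<delta> where "\<delta> = Min S"
  have "\<delta> \<in> S" using Sfin by (simp add: \<delta>_def)
  then obtain x0 E0 where "E0 \<in> set Es" "\<delta> = p x0 E0" by (auto simp: S_def)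
  then have "0 < \<delta>" using pos' by simp
  moreover have "\<forall>E\<in>set Es. \<forall>x. \<delta> \<le> p x E"
  proof (intro ballI allI)
    fix E x assume "E \<in> set Es"
    then have "p x E \<in> S" by (force simp: S_def)
    then show "\<delta> \<le> p x E" unfolding \<delta>_def using Sfin by simp
  qed
  ultimately show ?thesis using ne comp' cov gd' pos' by blast
qed

lemma K1: "\<exists>g m c. 0 < m \<and> 0 < c \<and> (\<forall>x. c \<le> Pt 0 m x (if g \<in> x then UNIV else {}))
   \<and> 0 < d_site p {} g \<and> 0 < d_site p UNIV g"
proof -
  obtain g Es \<delta> where ne: "Es \<noteq> []" and d0: "0 < \<delta>" and dl: "\<forall>E\<in>set Es. \<forall>x. \<delta> \<le> p x E"
    and comp: "\<forall>h. comp_ev Es h = g" and gd: "\<exists>E\<in>set Es. g \<in> dom E" and pos: "\<forall>E\<in>set Es. \<forall>x. 0 < p x E"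
    using fix_data by (elim exE conjE) (rule that; assumption)
  have eq: "{h. comp_ev Es h \<in> x} = (if g \<in> x then UNIV else {})" for x using comp by simp
  have "\<delta> ^ length Es \<le> Pt 0 (length Es) x (if g \<in> x then UNIV else {})" for x
    using Pt0_seq[OF less_imp_le[OF d0] dl, of x] unfolding eq .
  then have "\<forall>x. \<delta> ^ length Es \<le> Pt 0 (length Es) x (if g \<in> x then UNIV else {})" by blast
  moreover obtain E where "E \<in> set Es" "g \<in> dom E" using gd by blast
  then obtain h where h: "E g = Some h" by auto
  have "\<forall>x. 0 < p x E" using pos \<open>E \<in> set Es\<close> by blast
  then have "0 < d_site p {} g" "0 < d_site p UNIV g" using d_site_pos[of E g h] h by blast+
  moreover have "0 < length Es" "0 < \<delta> ^ length Es" using ne d0 by auto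
  ultimately show ?thesis by blast
qed

lemma K2: assumes "0 < u" "u \<le> 1" shows "\<exists>m c. 0 < c \<and> (\<forall>x. c \<le> Pt u m x {})"
proof -
  obtain g Es \<delta> where d0: "0 < \<delta>" and dl: "\<forall>E\<in>set Es. \<forall>x. \<delta> \<le> p x E"
    and cov: "(\<Union>E\<in>set Es. dom E) = UNIV"
    using fix_data by (elim exE conjE) (rule that; assumption)
  have "\<forall>n. 0 < (\<delta> * (u * (1 - \<nu>)) ^ n) ^ length Es" using d0 assms nu1 by simp
  then show ?thesis
    using Ptu_seq[OF less_imp_le[OF assms(1)] assms(2) less_imp_le[OF d0] dl] cov by auto
qed

definition Tr :: "'g state set" where "Tr = UNIV - {{}, UNIV}"

definition T :: "nat \<Rightarrow> 'g state \<Rightarrow> real" where "T t x = (\<Sum>y\<in>Tr. Pt 0 t x y)"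

lemma T_nonneg: "0 \<le> T t x" unfolding T_def by (intro sum_nonneg Pt_nonneg) auto

lemma T_eq: "T t x = 1 - Pt 0 t x {} - Pt 0 t x UNIV"
proof -
  have ne: "({} :: 'g set) \<noteq> UNIV" by auto
  have "(\<Sum>y\<in>UNIV. Pt 0 t x y) = T t x + (\<Sum>y\<in>{{}, UNIV}. Pt 0 t x y)"
    unfolding T_def Tr_def by (subst sum.subset_diff[of "{{}, UNIV}"]) auto
  then show ?thesis using ne Pt_sum[of 0 t x] by simp
qed

lemma T_step:
  assumes "\<And>z. T m z \<le> B" "0 \<le> B"
  shows "T (t + m) x \<le> B * T t x"
proof -
  have "T (t + m) x = (\<Sum>z\<in>UNIV. Pt 0 t x z * T m z)"
    unfolding T_def Pt_add by (subst sum.swap) (simp add: sum_distrib_left)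
  also have "\<dots> = (\<Sum>z\<in>Tr. Pt 0 t x z * T m z) + (\<Sum>z\<in>{{}, UNIV}. Pt 0 t x z * T m z)"
    unfolding Tr_def by (subst sum.subset_diff[of "{{}, UNIV}"]) auto
  also have "(\<Sum>z\<in>{{}, UNIV}. Pt 0 t x z * T m z) = 0"
  proof -
    have "T m z = 0" if "z = {} \<or> z = UNIV" for z
      unfolding T_def Tr_def Pt0_const[OF that] using that by (intro sum.neutral) auto
    then show ?thesis by (intro sum.neutral) auto
  qed
  also have "(\<Sum>z\<in>Tr. Pt 0 t x z * T m z) \<le> (\<Sum>z\<in>Tr. Pt 0 t x z * B)"
    by (intro sum_mono mult_left_mono assms Pt_nonneg) auto
  also have "\<dots> = B * T t x" unfolding T_def by (simp add: sum_distrib_left mult.commute)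
  finally show ?thesis by simp
qed

lemma T_decay: "\<exists>m c. 0 < m \<and> 0 < c \<and> c \<le> 1 \<and> (\<forall>j x. T (j * m) x \<le> (1 - c) ^ j)"
proof -
  obtain g m c where m: "0 < m" and c: "0 < c" and lb: "\<forall>x. c \<le> Pt 0 m x (if g \<in> x then UNIV else {})"
    using K1 by blast
  have Tm: "T m z \<le> 1 - c" for z
    using lb[rule_format, of z] T_eq[of m z] Pt_nonneg[of 0 m z "{}"] Pt_nonneg[of 0 m z UNIV]
    by (auto split: if_splits)
  have c1: "c \<le> 1" using Tm[of "{}"] T_nonneg[of m "{}"] by simp
  have "T (j * m) x \<le> (1 - c) ^ j" for j x
  proof (induction j arbitrary: x)
    case 0
    have "T 0 x \<le> 1" unfolding T_eq using Pt_nonneg[of 0 0 x] by (auto split: if_splits)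
    then show ?case by simp
  next
    case (Suc j)
    have "T (j * m + m) x \<le> (1 - c) * T (j * m) x" by (rule T_step) (use Tm c1 in auto)
    also have "\<dots> \<le> (1 - c) * (1 - c) ^ j" using Suc c1 by (intro mult_left_mono) auto
    finally show ?case by (simp add: add.commute)
  qed
  then show ?thesis using m c c1 by blast
qed

lemma T_lim: "(\<lambda>j. T (j * m) x) \<longlonglongrightarrow> 0" if "0 < m" "\<forall>j x. T (j * m) x \<le> (1 - c) ^ j" "0 < c" "c \<le> 1"
proof (rule tendsto_sandwich[of "\<lambda>_. 0" _ _ "\<lambda>j. (1 - c) ^ j"])
  show "(\<lambda>j. (1 - c) ^ j) \<longlonglongrightarrow> 0" using that by (intro LIMSEQ_power_zero) auto
qed (use that T_nonneg in auto)

lemma absorb_sum: "absorb p \<nu> x UNIV + absorb p \<nu> x {} = 1"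
proof -
  obtain m c where m: "0 < m" "0 < c" "c \<le> 1" "\<forall>j x. T (j * m) x \<le> (1 - c) ^ j"
    using T_decay by blast
  have sm: "strict_mono (\<lambda>j. j * m)" using m by (auto simp: strict_mono_def)
  have "(\<lambda>t. Pt 0 t x UNIV + Pt 0 t x {}) \<longlonglongrightarrow> absorb p \<nu> x UNIV + absorb p \<nu> x {}"
    by (intro tendsto_add Pt0_absorb_conv) auto
  then have "(\<lambda>j. Pt 0 (j * m) x UNIV + Pt 0 (j * m) x {}) \<longlonglongrightarrow> absorb p \<nu> x UNIV + absorb p \<nu> x {}"
    using LIMSEQ_subseq_LIMSEQ[OF _ sm] by (simp add: o_def)
  moreover have "(\<lambda>j. 1 - T (j * m) x) \<longlonglongrightarrow> 1 - 0"
    by (intro tendsto_diff tendsto_const T_lim[OF m(1) m(4) m(2,3)])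
  then have "(\<lambda>j. Pt 0 (j * m) x UNIV + Pt 0 (j * m) x {}) \<longlonglongrightarrow> 1"
    by (simp add: T_eq algebra_simps)
  ultimately show ?thesis using LIMSEQ_unique by fastforce
qed

lemma stationary_unique:
  assumes u: "0 < u" "u \<le> 1" and s1: "stationary p u \<nu> \<pi>1" and s2: "stationary p u \<nu> \<pi>2"
  shows "\<pi>1 = \<pi>2"
proof -
  obtain m c where c: "0 < c" and lb: "\<forall>x. c \<le> Pt u m x {}" using K2[OF u] by blast
  define w where "w x = \<pi>1 x - \<pi>2 x" for x
  have f1: "\<pi>1 y = (\<Sum>x\<in>UNIV. \<pi>1 x * P u x y)" "\<pi>2 y = (\<Sum>x\<in>UNIV. \<pi>2 x * P u x y)" for y
    using s1 s2 unfolding stationary_def by blast+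
  have wfix: "\<forall>y. w y = (\<Sum>x\<in>UNIV. w x * P u x y)"
  proof
    fix y
    have "(\<Sum>x\<in>UNIV. w x * P u x y) = (\<Sum>x\<in>UNIV. \<pi>1 x * P u x y) - (\<Sum>x\<in>UNIV. \<pi>2 x * P u x y)"
      unfolding w_def by (simp add: left_diff_distrib sum_subtractf)
    then show "w y = (\<Sum>x\<in>UNIV. w x * P u x y)" using f1[of y] by (simp add: w_def)
  qed
  have "(\<Sum>x\<in>UNIV. \<pi>1 x) = 1" "(\<Sum>x\<in>UNIV. \<pi>2 x) = 1" using s1 s2 unfolding stationary_def by blast+
  then have wsum: "(\<Sum>x\<in>UNIV. w x) = 0" unfolding w_def by (simp add: sum_subtractf)
  define Q where "Q x y = Pt u m x y - (if y = {} then c else 0)" for x y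
  have Qnn: "0 \<le> Q x y" for x y
    using lb Pt_nonneg[of u m x y] u by (auto simp: Q_def)
  have Qsum: "(\<Sum>y\<in>UNIV. Q x y) = 1 - c" for x
    by (simp add: Q_def sum_subtractf Pt_sum)
  have wQ: "w y = (\<Sum>x\<in>UNIV. w x * Q x y)" for y
  proof -
    have "(\<Sum>x\<in>UNIV. w x * Q x y) = (\<Sum>x\<in>UNIV. w x * Pt u m x y) - (if y = {} then c else 0) * (\<Sum>x\<in>UNIV. w x)"
      by (simp add: Q_def right_diff_distrib sum_subtractf sum_distrib_left[symmetric] sum_distrib_right[symmetric])
    then show ?thesis using wsum stationary_Pt[OF wfix, of y m] by simp
  qed
  have "(\<Sum>y\<in>UNIV. \<bar>w y\<bar>) \<le> (\<Sum>y\<in>UNIV. \<Sum>x\<in>UNIV. \<bar>w x\<bar> * Q x y)"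
  proof (rule sum_mono)
    fix y
    have "\<bar>w y\<bar> \<le> (\<Sum>x\<in>UNIV. \<bar>w x * Q x y\<bar>)" by (subst wQ) (rule sum_abs)
    also have "\<dots> = (\<Sum>x\<in>UNIV. \<bar>w x\<bar> * Q x y)" using Qnn by (simp add: abs_mult)
    finally show "\<bar>w y\<bar> \<le> (\<Sum>x\<in>UNIV. \<bar>w x\<bar> * Q x y)" .
  qed
  also have "\<dots> = (1 - c) * (\<Sum>x\<in>UNIV. \<bar>w x\<bar>)"
  proof -
    have "(\<Sum>y\<in>UNIV. \<Sum>x\<in>UNIV. \<bar>w x\<bar> * Q x y) = (\<Sum>x\<in>UNIV. \<bar>w x\<bar> * (\<Sum>y\<in>UNIV. Q x y))"
      by (subst sum.swap) (simp add: sum_distrib_left)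
    also have "\<dots> = (\<Sum>x\<in>UNIV. \<bar>w x\<bar>) * (1 - c)" by (simp add: Qsum sum_distrib_right)
    finally show ?thesis by simp
  qed
  finally have "c * (\<Sum>x\<in>UNIV. \<bar>w x\<bar>) \<le> 0" by (simp add: algebra_simps)
  then have "(\<Sum>x\<in>UNIV. \<bar>w x\<bar>) \<le> 0" using c by (simp add: mult_le_0_iff)
  moreover have "0 \<le> (\<Sum>x\<in>UNIV. \<bar>w x\<bar>)" by (rule sum_nonneg) simp
  ultimately have "(\<Sum>x\<in>UNIV. \<bar>w x\<bar>) = 0" by linarith
  then have "\<forall>x\<in>UNIV. \<bar>w x\<bar> = 0" by (subst (asm) sum_nonneg_eq_0_iff) auto
  then show ?thesis by (auto simp: w_def fun_eq_iff)
qed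

lemma pi_MSS_stationary:
  assumes u: "0 < u" "u \<le> 1"
  shows "stationary p u \<nu> (pi_MSS p u \<nu>)"
proof -
  have "\<exists>!\<pi>. stationary p u \<nu> \<pi>"
  proof (rule ex_ex1I)
    show "\<exists>\<pi>. stationary p u \<nu> \<pi>" using stationary_exists[of u] u by simp
  qed (rule stationary_unique[OF u])
  then show ?thesis unfolding pi_MSS_def by (rule theI')
qed

end




context mchain begin

lemma P_diff:
  assumes u: "0 \<le> u" "u \<le> 1"
  shows "\<bar>P u x y - P 0 x y\<bar> \<le> real CARD('g) * u"
proof -
  let ?C = "\<lambda>E. \<forall>g. E g = None \<longrightarrow> (g \<in> y \<longleftrightarrow> g \<in> x)"
  let ?pr = "\<lambda>u E. \<Prod>g\<in>dom E. site_prob u \<nu> (the (E g) \<in> x) (g \<in> y)"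
  have sp: "\<bar>site_prob u \<nu> a b - site_prob 0 \<nu> a b\<bar> \<le> u" for a b
  proof -
    have "\<nu> * u \<le> u" "0 \<le> \<nu> * u" using mult_left_le_one_le[of u \<nu>] u nu0 nu1 by auto
    then show ?thesis using u nu0 nu1 by (auto simp: site_prob_def abs_if algebra_simps)
  qed
  have pr: "\<bar>?pr u E - ?pr 0 E\<bar> \<le> real CARD('g) * u" for E
  proof -
    have "\<bar>?pr u E - ?pr 0 E\<bar> \<le> (\<Sum>g\<in>dom E. \<bar>site_prob u \<nu> (the (E g) \<in> x) (g \<in> y) - site_prob 0 \<nu> (the (E g) \<in> x) (g \<in> y)\<bar>)"
      using norm_prod_diff[of "dom E" "\<lambda>g. site_prob u \<nu> (the (E g) \<in> x) (g \<in> y)" "\<lambda>g. site_prob 0 \<nu> (the (E g) \<in> x) (g \<in> y)"]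
        site_prob_bounds[of u \<nu>] site_prob_bounds[of 0 \<nu>] u nu0 nu1 by simp
    also have "\<dots> \<le> (\<Sum>g\<in>dom E. u)" by (intro sum_mono sp)
    also have "\<dots> = real (card (dom E)) * u" by simp
    also have "\<dots> \<le> real CARD('g) * u" using u by (intro mult_right_mono) (auto simp: card_mono)
    finally show ?thesis .
  qed
  have "\<bar>P u x y - P 0 x y\<bar> = \<bar>\<Sum>E\<in>UNIV. p x E * (if ?C E then ?pr u E else 0) - p x E * (if ?C E then ?pr 0 E else 0)\<bar>"
    unfolding trans_prob_def by (simp only: sum_subtractf)
  also have "\<dots> \<le> (\<Sum>E\<in>UNIV. \<bar>p x E * (if ?C E then ?pr u E else 0) - p x E * (if ?C E then ?pr 0 E else 0)\<bar>)" by (rule sum_abs)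
  also have "\<dots> \<le> (\<Sum>E\<in>UNIV. p x E * (real CARD('g) * u))"
  proof (rule sum_mono)
    fix E
    show "\<bar>p x E * (if ?C E then ?pr u E else 0) - p x E * (if ?C E then ?pr 0 E else 0)\<bar> \<le> p x E * (real CARD('g) * u)"
    proof (cases "?C E")
      case True
      have "\<bar>p x E * ?pr u E - p x E * ?pr 0 E\<bar> = p x E * \<bar>?pr u E - ?pr 0 E\<bar>"
        using p_nonneg[of x E] by (simp add: right_diff_distrib[symmetric] abs_mult)
      also have "\<dots> \<le> p x E * (real CARD('g) * u)" using pr[of E] p_nonneg[of x E] by (rule mult_left_mono)
      finally show ?thesis unfolding if_P[OF True] .
    next
      case False
      show ?thesis unfolding if_not_P[OF False] using p_nonneg[of x E] u by simp
    qed
  qed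
  also have "\<dots> = real CARD('g) * u" by (simp add: sum_distrib_right[symmetric] p_sum)
  finally show ?thesis .
qed

end

context fchain begin

lemma ev_u: "eventually (\<lambda>u. 0 < u \<and> u \<le> (1::real)) (at_right 0)"
  unfolding eventually_at_right_field by (intro exI[of _ 1]) auto

lemma trans_vanish: "((\<lambda>u. \<Sum>y\<in>Tr. pi_MSS p u \<nu> y) \<longlongrightarrow> 0) (at_right 0)"
proof (rule tendstoI)
  fix e :: real assume e: "0 < e"
  obtain m c where m: "0 < m" "0 < c" "c \<le> 1" "\<forall>j x. T (j * m) x \<le> (1 - c) ^ j"
    using T_decay by blast
  obtain j where j: "(1 - c) ^ j < e / 2" using real_arch_pow_inv[of "e / 2" "1 - c"] e m by auto
  define t where "t = j * m"
  have "eventually (\<lambda>u. (\<Sum>y\<in>Tr. Pt u t x y) < e / 2) (at_right 0)" for x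
  proof (rule order_tendstoD(2))
    show "((\<lambda>u. \<Sum>y\<in>Tr. Pt u t x y) \<longlongrightarrow> T t x) (at_right 0)"
      unfolding T_def by (intro tendsto_sum Pt_tendsto)
    show "T t x < e / 2" using m(4) j unfolding t_def by (meson le_less_trans)
  qed
  then have "eventually (\<lambda>u. \<forall>x. (\<Sum>y\<in>Tr. Pt u t x y) < e / 2) (at_right 0)"
    by (rule eventually_all_finite)
  then show "eventually (\<lambda>u. dist (\<Sum>y\<in>Tr. pi_MSS p u \<nu> y) 0 < e) (at_right 0)"
    using ev_u
  proof eventually_elim
    case (elim u)
    let ?\<pi> = "pi_MSS p u \<nu>"
    have st: "stationary p u \<nu> ?\<pi>" using pi_MSS_stationary elim by auto
    then have fx: "\<forall>y. ?\<pi> y = (\<Sum>x\<in>UNIV. ?\<pi> x * P u x y)" and nn: "\<forall>x. 0 \<le> ?\<pi> x"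
      and s1: "(\<Sum>x\<in>UNIV. ?\<pi> x) = 1"
      unfolding stationary_def by blast+
    have "(\<Sum>y\<in>Tr. ?\<pi> y) = (\<Sum>y\<in>Tr. \<Sum>x\<in>UNIV. ?\<pi> x * Pt u t x y)"
      by (intro sum.cong refl stationary_Pt[OF fx])
    also have "\<dots> = (\<Sum>x\<in>UNIV. ?\<pi> x * (\<Sum>y\<in>Tr. Pt u t x y))"
      by (subst sum.swap) (simp add: sum_distrib_left)
    also have "\<dots> \<le> (\<Sum>x\<in>UNIV. ?\<pi> x * (e / 2))"
      using elim nn by (intro sum_mono mult_left_mono) (auto intro: less_imp_le)
    also have "\<dots> = (\<Sum>x\<in>UNIV. ?\<pi> x) * (e / 2)" by (rule sum_distrib_right[symmetric])
    also have "\<dots> = e / 2" using s1 by simp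
    finally have "(\<Sum>y\<in>Tr. ?\<pi> y) \<le> e / 2" .
    moreover have "0 \<le> (\<Sum>y\<in>Tr. ?\<pi> y)" using nn by (intro sum_nonneg) auto
    ultimately show ?case using e by (simp add: dist_real_def)
  qed
qed

end




lemma prod_le_two:
  fixes f :: "'a \<Rightarrow> real"
  assumes "finite D" "g1 \<in> D" "g2 \<in> D" "g1 \<noteq> g2" "\<And>h. h \<in> D \<Longrightarrow> 0 \<le> f h \<and> f h \<le> 1"
  shows "(\<Prod>h\<in>D. f h) \<le> f g1 * f g2"
proof -
  have "(\<Prod>h\<in>D. f h) = f g1 * (\<Prod>h\<in>D - {g1}. f h)" using assms by (simp add: prod.remove)
  also have "(\<Prod>h\<in>D - {g1}. f h) = f g2 * (\<Prod>h\<in>D - {g1} - {g2}. f h)" using assms by (simp add: prod.remove)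
  also have "(\<Prod>h\<in>D - {g1} - {g2}. f h) \<le> 1" using assms by (intro prod_le_1) auto
  then have "f g2 * (\<Prod>h\<in>D - {g1} - {g2}. f h) \<le> f g2" using assms(3) assms(5)[of g2] by (simp add: mult_left_le)
  then have "f g1 * (f g2 * (\<Prod>h\<in>D - {g1} - {g2}. f h)) \<le> f g1 * f g2" using assms(2) assms(5)[of g1] by (intro mult_left_mono) auto
  finally show ?thesis .
qed

lemma site_prob_flip: "site_prob u \<nu> a (\<not> a) = u * (if a then 1 - \<nu> else \<nu>)"
  unfolding site_prob_def by auto

definition flip :: "'g set \<Rightarrow> 'g \<Rightarrow> 'g set" where
  "flip z g = (if g \<in> z then z - {g} else insert g z)"

lemma flip_inj: "flip z g = flip z g' \<Longrightarrow> g = g'"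
  unfolding flip_def by (auto split: if_splits)

lemma flip_mem: "(h \<in> flip z g) = (if h = g then h \<notin> z else h \<in> z)"
  unfolding flip_def by auto

lemma flip_ne: "flip z g \<noteq> z"
  unfolding flip_def by auto

lemma flip_const [simp]: "flip {} g = {g}" "flip UNIV g = UNIV - {g}"
  unfolding flip_def by auto

lemma const_mem: "z = {} \<or> z = UNIV \<Longrightarrow> (a \<in> z) = (z = UNIV)"
  by auto

context mchain begin

lemma ev_u01: "eventually (\<lambda>u. 0 < u \<and> u \<le> (1::real)) (at_right 0)"
  unfolding eventually_at_right_field by (intro exI[of _ 1]) auto

definition mrate :: "'g state \<Rightarrow> real" where "mrate z = (if z = UNIV then 1 - \<nu> else \<nu>)"

lemma d_site_alt: "d_site p x g = (\<Sum>E\<in>UNIV. if g \<in> dom E then p x E else 0)"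
proof -
  have "d_site p x g = (\<Sum>h\<in>UNIV. \<Sum>E\<in>UNIV. if E g = Some h then p x E else 0)"
    unfolding d_site_def e_rate_def by (simp add: sum.If_cases Int_def)
  also have "\<dots> = (\<Sum>E\<in>UNIV. \<Sum>h\<in>UNIV. if E g = Some h then p x E else 0)" by (rule sum.swap)
  also have "\<dots> = (\<Sum>E\<in>UNIV. if g \<in> dom E then p x E else 0)"
  proof (rule sum.cong[OF refl])
    fix E :: "'g event"
    show "(\<Sum>h\<in>UNIV. if E g = Some h then p x E else 0) = (if g \<in> dom E then p x E else 0)"
    proof (cases "E g")
      case None then show ?thesis by (simp add: domIff)
    next
      case (Some h0)
      have "(\<Sum>h\<in>UNIV. if E g = Some h then p x E else 0) = (\<Sum>h\<in>UNIV. if h = h0 then p x E else 0)"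
        using Some by (intro sum.cong) auto
      then show ?thesis using Some by (simp add: domIff)
    qed
  qed
  finally show ?thesis .
qed

lemma P_small:
  assumes zc: "z = {} \<or> z = UNIV" and u: "0 \<le> u" "u \<le> 1" and g12: "g1 \<noteq> g2"
    and d1: "(g1 \<in> y) \<noteq> (g1 \<in> z)" and d2: "(g2 \<in> y) \<noteq> (g2 \<in> z)"
  shows "P u z y \<le> u ^ 2"
proof -
  let ?f = "\<lambda>E h. site_prob u \<nu> (the (E h) \<in> z) (h \<in> y)"
  have fb: "0 \<le> ?f E h \<and> ?f E h \<le> 1" for E h using site_prob_bounds[OF u] nu0 nu1 by auto
  have fl: "?f E h \<le> u" if "(h \<in> y) \<noteq> (h \<in> z)" for E h
  proof -
    have e1: "(the (E h) \<in> z) = (h \<in> z)" using const_mem[OF zc] by simp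
    have e2: "(h \<in> y) = (\<not> (h \<in> z))" using that by auto
    have "?f E h = site_prob u \<nu> (h \<in> z) (\<not> (h \<in> z))" by (simp only: e1 e2)
    also have "\<dots> = u * (if h \<in> z then 1 - \<nu> else \<nu>)" by (rule site_prob_flip)
    also have "\<dots> \<le> u" using u nu0 nu1 by (auto intro: mult_left_le)
    finally show ?thesis .
  qed
  have "P u z y \<le> (\<Sum>E\<in>UNIV. p z E * u ^ 2)"
    unfolding trans_prob_def
  proof (rule sum_mono)
    fix E :: "'g event"
    show "p z E * (if \<forall>g. E g = None \<longrightarrow> (g \<in> y \<longleftrightarrow> g \<in> z) then \<Prod>g\<in>dom E. ?f E g else 0) \<le> p z E * u ^ 2"
    proof (cases "\<forall>g. E g = None \<longrightarrow> (g \<in> y \<longleftrightarrow> g \<in> z)")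
      case True
      then have "g1 \<in> dom E" "g2 \<in> dom E" using d1 d2 by auto
      then have "(\<Prod>g\<in>dom E. ?f E g) \<le> ?f E g1 * ?f E g2"
        using g12 fb by (intro prod_le_two) auto
      also have "\<dots> \<le> u * u" using fl[OF d1] fl[OF d2] fb u by (intro mult_mono) auto
      finally show ?thesis unfolding if_P[OF True] using p_nonneg[of z E]
        by (intro mult_left_mono) (auto simp: power2_eq_square)
    next
      case False
      show ?thesis unfolding if_not_P[OF False] using p_nonneg[of z E] by simp
    qed
  qed
  also have "\<dots> = u ^ 2" by (simp add: sum_distrib_right[symmetric] p_sum)
  finally show ?thesis .
qed

lemma P_flip:
  assumes zc: "z = {} \<or> z = UNIV"
  shows "P u z (flip z g) = u * mrate z * (\<Sum>E\<in>UNIV. p z E *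
     (if g \<in> dom E then \<Prod>h\<in>dom E - {g}. site_prob u \<nu> (z = UNIV) (z = UNIV) else 0))"
proof -
  have "P u z (flip z g) = (\<Sum>E\<in>UNIV. u * mrate z * (p z E *
     (if g \<in> dom E then \<Prod>h\<in>dom E - {g}. site_prob u \<nu> (z = UNIV) (z = UNIV) else 0)))"
    unfolding trans_prob_def
  proof (rule sum.cong[OF refl])
    fix E :: "'g event"
    have C: "(\<forall>h. E h = None \<longrightarrow> (h \<in> flip z g \<longleftrightarrow> h \<in> z)) = (g \<in> dom E)"
      by (auto simp: flip_mem domIff)
    show "p z E * (if \<forall>h. E h = None \<longrightarrow> (h \<in> flip z g \<longleftrightarrow> h \<in> z)
       then \<Prod>h\<in>dom E. site_prob u \<nu> (the (E h) \<in> z) (h \<in> flip z g) else 0) =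
       u * mrate z * (p z E * (if g \<in> dom E then \<Prod>h\<in>dom E - {g}. site_prob u \<nu> (z = UNIV) (z = UNIV) else 0))"
    proof (cases "g \<in> dom E")
      case True
      have "(\<Prod>h\<in>dom E. site_prob u \<nu> (the (E h) \<in> z) (h \<in> flip z g))
          = site_prob u \<nu> (the (E g) \<in> z) (g \<in> flip z g) * (\<Prod>h\<in>dom E - {g}. site_prob u \<nu> (the (E h) \<in> z) (h \<in> flip z g))"
        using True by (simp add: prod.remove)
      also have "site_prob u \<nu> (the (E g) \<in> z) (g \<in> flip z g) = u * mrate z"
        using const_mem[OF zc] by (auto simp: flip_mem site_prob_def mrate_def)
      also have "(\<Prod>h\<in>dom E - {g}. site_prob u \<nu> (the (E h) \<in> z) (h \<in> flip z g)) =
                 (\<Prod>h\<in>dom E - {g}. site_prob u \<nu> (z = UNIV) (z = UNIV))"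
        using const_mem[OF zc] by (intro prod.cong refl) (auto simp: flip_mem)
      finally show ?thesis using True unfolding C by simp
    next
      case False
      then show ?thesis unfolding C by simp
    qed
  qed
  then show ?thesis by (simp add: sum_distrib_left[symmetric])
qed

lemma sp_tendsto: "((\<lambda>u. site_prob u \<nu> a b) \<longlongrightarrow> site_prob 0 \<nu> a b) (at_right 0)"
proof -
  have "((\<lambda>u. site_prob 0 \<nu> a b + u * (site_prob 1 \<nu> a b - site_prob 0 \<nu> a b)) \<longlongrightarrow>
     site_prob 0 \<nu> a b + 0 * (site_prob 1 \<nu> a b - site_prob 0 \<nu> a b)) (at_right 0)"
    by (intro tendsto_intros)
  then show ?thesis by (subst site_prob_lin) simp
qed

lemma flip_lim:
  assumes zc: "z = {} \<or> z = UNIV"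
  shows "((\<lambda>u. P u z (flip z g) / u) \<longlongrightarrow> mrate z * d_site p z g) (at_right 0)"
proof -
  let ?c = "z = UNIV"
  let ?F = "\<lambda>u. mrate z * (\<Sum>E\<in>UNIV. p z E * (if g \<in> dom E then \<Prod>h\<in>dom E - {g}. site_prob u \<nu> ?c ?c else 0))"
  have "(?F \<longlongrightarrow> mrate z * (\<Sum>E\<in>UNIV. p z E * (if g \<in> dom E then \<Prod>h\<in>dom E - {g}. site_prob 0 \<nu> ?c ?c else 0))) (at_right 0)"
    by (intro tendsto_intros tendsto_if_const sp_tendsto)
  also have "mrate z * (\<Sum>E\<in>UNIV. p z E * (if g \<in> dom E then \<Prod>h\<in>dom E - {g}. site_prob 0 \<nu> ?c ?c else 0))
      = mrate z * d_site p z g"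
    unfolding d_site_alt by (simp add: site_prob_def if_distrib cong: if_cong)
  finally have lim: "(?F \<longlongrightarrow> mrate z * d_site p z g) (at_right 0)" .
  have "eventually (\<lambda>u. ?F u = P u z (flip z g) / u) (at_right 0)"
    using eventually_at_right_less[of 0]
  proof eventually_elim
    case (elim u)
    then show ?case unfolding P_flip[OF zc] by simp
  qed
  then show ?thesis using lim by (rule Lim_transform_eventually[rotated])
qed

lemma sum_lim:
  assumes zc: "z = {} \<or> z = UNIV" and fz: "f z = 0"
  shows "((\<lambda>u. \<Sum>y\<in>UNIV. P u z y * f y / u) \<longlongrightarrow> mrate z * (\<Sum>g\<in>UNIV. d_site p z g * f (flip z g))) (at_right 0)"
proof -
  define L where "L y = (\<Sum>g\<in>UNIV. if y = flip z g then mrate z * d_site p z g * f y else 0)" for y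
  have each: "((\<lambda>u. P u z y * f y / u) \<longlongrightarrow> L y) (at_right 0)" for y
  proof (cases "y = z")
    case True
    then have "L y = 0" unfolding L_def using flip_ne[of z] by (intro sum.neutral) auto
    then show ?thesis using True fz by simp
  next
    case False
    show ?thesis
    proof (cases "\<exists>g. y = flip z g")
      case True
      then obtain g0 where g0: "y = flip z g0" by blast
      have "L y = (\<Sum>g\<in>UNIV. if g = g0 then mrate z * d_site p z g0 * f y else 0)"
        unfolding L_def
      proof (intro sum.cong refl)
        fix g
        have "y = flip z g \<longleftrightarrow> g = g0" using g0 flip_inj[of z g g0] by auto
        then show "(if y = flip z g then mrate z * d_site p z g * f y else 0) =
          (if g = g0 then mrate z * d_site p z g0 * f y else 0)" by simp
      qed
      then have Ly: "L y = mrate z * d_site p z g0 * f y" by simp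
      have "((\<lambda>u. P u z y / u * f y) \<longlongrightarrow> mrate z * d_site p z g0 * f y) (at_right 0)"
        unfolding g0 by (intro tendsto_intros flip_lim zc)
      then show ?thesis unfolding Ly by (simp add: field_simps)
    next
      case nf: False
      have "L y = 0" unfolding L_def using nf by (intro sum.neutral) auto
      obtain g1 where g1: "(g1 \<in> y) \<noteq> (g1 \<in> z)" using False by (auto simp: set_eq_iff)
      obtain g2 where g2: "(g2 \<in> y) \<noteq> (g2 \<in> z)" "g2 \<noteq> g1"
      proof -
        have "\<exists>g2. (g2 \<in> y) \<noteq> (g2 \<in> z) \<and> g2 \<noteq> g1"
        proof (rule ccontr)
          assume "\<not> ?thesis"
          then have "\<forall>h. (h \<in> y) = (h \<in> flip z g1)" using g1 unfolding flip_mem by metis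
          then have "y = flip z g1" by blast
          then show False using nf by blast
        qed
        then show ?thesis using that by blast
      qed
      have "((\<lambda>u. P u z y / u) \<longlongrightarrow> 0) (at_right 0)"
      proof (rule tendsto_sandwich[of "\<lambda>_. 0" _ _ "\<lambda>u. u"])
        show "eventually (\<lambda>u. 0 \<le> P u z y / u) (at_right 0)"
          using ev_u01 by eventually_elim (auto intro!: divide_nonneg_pos P_nonneg)
        show "eventually (\<lambda>u. P u z y / u \<le> u) (at_right 0)"
          using ev_u01
        proof eventually_elim
          case (elim u)
          have "P u z y \<le> u ^ 2" using P_small[OF zc _ _ g2(2)[symmetric] g1 g2(1)] elim by auto
          then show ?case using elim by (simp add: divide_le_eq power2_eq_square)
        qed
        show "((\<lambda>u. u) \<longlongrightarrow> 0) (at_right (0::real))" by (rule tendsto_ident_at)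
      qed simp
      then have "((\<lambda>u. P u z y / u * f y) \<longlongrightarrow> 0 * f y) (at_right 0)" by (intro tendsto_intros)
      then show ?thesis using \<open>L y = 0\<close> by (simp add: field_simps)
    qed
  qed
  have "((\<lambda>u. \<Sum>y\<in>UNIV. P u z y * f y / u) \<longlongrightarrow> (\<Sum>y\<in>UNIV. L y)) (at_right 0)"
    by (intro tendsto_sum each)
  moreover have "(\<Sum>y\<in>UNIV. L y) = mrate z * (\<Sum>g\<in>UNIV. d_site p z g * f (flip z g))"
  proof -
    have "(\<Sum>y\<in>UNIV. L y) = (\<Sum>g\<in>UNIV. \<Sum>y\<in>UNIV. if y = flip z g then mrate z * d_site p z g * f y else 0)"
      unfolding L_def by (rule sum.swap)
    also have "\<dots> = (\<Sum>g\<in>UNIV. mrate z * d_site p z g * f (flip z g))" by simp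
    finally show ?thesis by (simp add: sum_distrib_left mult.assoc)
  qed
  ultimately show ?thesis by simp
qed

end




context fchain begin

lemma sum_split: fixes f :: "'g set \<Rightarrow> real" shows "(\<Sum>x\<in>UNIV. f x) = f {} + f UNIV + (\<Sum>x\<in>Tr. f x)"
proof -
  have ne: "({} :: 'g set) \<noteq> UNIV" by auto
  have "(\<Sum>x\<in>UNIV. f x) = (\<Sum>x\<in>Tr. f x) + (\<Sum>x\<in>{{}, UNIV}. f x)"
    unfolding Tr_def by (subst sum.subset_diff[of "{{}, UNIV}"]) auto
  moreover have "(\<Sum>x\<in>{{}, UNIV}. f x) = f {} + f UNIV" using ne by simp
  ultimately show ?thesis by linarith
qed

lemma b_total_alt: "b_total p x = (\<Sum>g\<in>UNIV. d_site p x g)"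
  unfolding b_total_def b_site_def d_site_def by (rule sum.swap)

lemma d_site_nonneg: "0 \<le> d_site p x g"
  unfolding d_site_def e_rate_def by (intro sum_nonneg p_nonneg)

definition Hf :: "real \<Rightarrow> 'g state \<Rightarrow> real" where
  "Hf u x = (\<Sum>y\<in>UNIV. (P u x y - P 0 x y) * absorb p \<nu> y UNIV) / u"

lemma absorb_le1: "absorb p \<nu> x A \<le> 1" if "A = {} \<or> A = UNIV"
  using that absorb_sum[of x] absorb_nonneg[of "{}" x] absorb_nonneg[of UNIV x] by auto

lemma key_identity:
  assumes u: "0 < u" "u \<le> 1"
  shows "(\<Sum>x\<in>UNIV. pi_MSS p u \<nu> x * Hf u x) = 0"
proof -
  let ?\<pi> = "pi_MSS p u \<nu>"
  let ?\<phi> = "\<lambda>y. absorb p \<nu> y UNIV"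
  have fx: "?\<pi> y = (\<Sum>x\<in>UNIV. ?\<pi> x * P u x y)" for y
    using pi_MSS_stationary[OF u] unfolding stationary_def by blast
  have h: "?\<phi> x = (\<Sum>y\<in>UNIV. P 0 x y * ?\<phi> y)" for x by (rule absorb_harm) simp
  have "(\<Sum>x\<in>UNIV. ?\<pi> x * (\<Sum>y\<in>UNIV. P u x y * ?\<phi> y)) = (\<Sum>y\<in>UNIV. (\<Sum>x\<in>UNIV. ?\<pi> x * P u x y) * ?\<phi> y)"
    by (simp add: sum_distrib_left sum_distrib_right mult.assoc) (rule sum.swap)
  also have "\<dots> = (\<Sum>y\<in>UNIV. ?\<pi> y * ?\<phi> y)" by (simp add: fx[symmetric])
  finally have e1: "(\<Sum>x\<in>UNIV. ?\<pi> x * (\<Sum>y\<in>UNIV. P u x y * ?\<phi> y)) = (\<Sum>x\<in>UNIV. ?\<pi> x * ?\<phi> x)" .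
  have G: "(\<Sum>y\<in>UNIV. (P u x y - P 0 x y) * ?\<phi> y) = (\<Sum>y\<in>UNIV. P u x y * ?\<phi> y) - ?\<phi> x" for x
    by (subst h[of x]) (simp add: left_diff_distrib sum_subtractf)
  have "(\<Sum>x\<in>UNIV. ?\<pi> x * Hf u x) = (\<Sum>x\<in>UNIV. ?\<pi> x * (\<Sum>y\<in>UNIV. (P u x y - P 0 x y) * ?\<phi> y)) / u"
    unfolding Hf_def by (simp add: sum_divide_distrib[symmetric])
  also have "\<dots> = (\<Sum>x\<in>UNIV. ?\<pi> x * (\<Sum>y\<in>UNIV. P u x y * ?\<phi> y) - ?\<pi> x * ?\<phi> x) / u"
    unfolding G by (simp add: right_diff_distrib)
  also have "\<dots> = 0" using e1 by (simp add: sum_subtractf)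
  finally show ?thesis .
qed

lemma H_bound:
  assumes u: "0 < u" "u \<le> 1"
  shows "\<bar>Hf u x\<bar> \<le> real CARD('g) * real CARD('g set)"
proof -
  have "\<bar>\<Sum>y\<in>UNIV. (P u x y - P 0 x y) * absorb p \<nu> y UNIV\<bar> \<le> (\<Sum>y\<in>UNIV. \<bar>(P u x y - P 0 x y) * absorb p \<nu> y UNIV\<bar>)"
    by (rule sum_abs)
  also have "\<dots> \<le> (\<Sum>y\<in>(UNIV::'g set set). real CARD('g) * u)"
  proof (rule sum_mono)
    fix y
    have "\<bar>(P u x y - P 0 x y) * absorb p \<nu> y UNIV\<bar> = \<bar>P u x y - P 0 x y\<bar> * absorb p \<nu> y UNIV"
      using absorb_nonneg[of UNIV y] by (simp add: abs_mult)
    also have "\<dots> \<le> \<bar>P u x y - P 0 x y\<bar> * 1" using absorb_le1[of UNIV y] by (intro mult_left_mono) auto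
    also have "\<dots> \<le> real CARD('g) * u" using P_diff[of u x y] u by simp
    finally show "\<bar>(P u x y - P 0 x y) * absorb p \<nu> y UNIV\<bar> \<le> real CARD('g) * u" .
  qed
  also have "\<dots> = real CARD('g set) * real CARD('g) * u" by simp
  finally have "\<bar>\<Sum>y\<in>UNIV. (P u x y - P 0 x y) * absorb p \<nu> y UNIV\<bar> \<le> real CARD('g set) * real CARD('g) * u" .
  then show ?thesis using u unfolding Hf_def by (simp add: abs_div pos_divide_le_eq mult.commute mult.left_commute)
qed

lemma H_a_lim: "((\<lambda>u. Hf u {}) \<longlongrightarrow> \<nu> * (\<Sum>g\<in>UNIV. d_site p {} g * absorb p \<nu> {g} UNIV)) (at_right 0)"
proof -
  have z: "({}::'g set) = {} \<or> {} = (UNIV::'g set)" by simp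
  have eq: "Hf u {} = (\<Sum>y\<in>UNIV. P u {} y * absorb p \<nu> y UNIV / u)" for u
  proof -
    have "(\<Sum>y\<in>UNIV. (P u {} y - P 0 {} y) * absorb p \<nu> y UNIV) = (\<Sum>y\<in>UNIV. P u {} y * absorb p \<nu> y UNIV)"
      using absorb_const[OF z, of UNIV] by (intro sum.cong refl) (auto simp: P0_const[OF z])
    then show ?thesis unfolding Hf_def by (simp add: sum_divide_distrib)
  qed
  have "absorb p \<nu> {} UNIV = 0" using absorb_const[OF z, of UNIV] by simp
  from sum_lim[where f="\<lambda>y. absorb p \<nu> y UNIV", OF z this] show ?thesis unfolding eq by (simp add: mrate_def)
qed

lemma H_A_lim: "((\<lambda>u. Hf u UNIV) \<longlongrightarrow> - ((1 - \<nu>) * (\<Sum>g\<in>UNIV. d_site p UNIV g * absorb p \<nu> (UNIV - {g}) {}))) (at_right 0)"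
proof -
  have z: "(UNIV::'g set) = {} \<or> UNIV = (UNIV::'g set)" by simp
  have eq: "Hf u UNIV = - (\<Sum>y\<in>UNIV. P u UNIV y * absorb p \<nu> y {} / u)" for u
  proof -
    have ph: "absorb p \<nu> y UNIV = 1 - absorb p \<nu> y {}" for y using absorb_sum[of y] by simp
    have "(\<Sum>y\<in>UNIV. (P u UNIV y - P 0 UNIV y) * absorb p \<nu> y UNIV)
        = (\<Sum>y\<in>UNIV. P u UNIV y) - (\<Sum>y\<in>UNIV. P 0 UNIV y) - ((\<Sum>y\<in>UNIV. P u UNIV y * absorb p \<nu> y {}) - (\<Sum>y\<in>UNIV. P 0 UNIV y * absorb p \<nu> y {}))"
      unfolding ph by (simp only: right_diff_distrib left_diff_distrib mult_1_right sum_subtractf)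
    also have "(\<Sum>y\<in>UNIV. P 0 UNIV y * absorb p \<nu> y {}) = 0"
      using absorb_const[OF z, of "{}"] by (intro sum.neutral) (auto simp: P0_const[OF z])
    finally have "(\<Sum>y\<in>UNIV. (P u UNIV y - P 0 UNIV y) * absorb p \<nu> y UNIV) = - (\<Sum>y\<in>UNIV. P u UNIV y * absorb p \<nu> y {})"
      by (simp add: P_sum)
    then show ?thesis unfolding Hf_def by (simp add: sum_divide_distrib)
  qed
  have "absorb p \<nu> UNIV {} = 0" using absorb_const[OF z, of "{}"] by simp
  from tendsto_minus[OF sum_lim[where f="\<lambda>y. absorb p \<nu> y {}", OF z this]] show ?thesis unfolding eq by (simp add: mrate_def)
qed

end




context fchain begin

lemma pos_facts:
  "0 < \<nu> * (\<Sum>g\<in>UNIV. d_site p {} g * absorb p \<nu> {g} UNIV)"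
  "0 < b_total p {}" "0 < b_total p UNIV"
proof -
  obtain g0 m c where m: "0 < m" "0 < c" and lb: "\<forall>x. c \<le> Pt 0 m x (if g0 \<in> x then UNIV else {})"
    and d0: "0 < d_site p {} g0" and d1: "0 < d_site p UNIV g0"
    using K1 by blast
  have "c \<le> Pt 0 m {g0} UNIV" using lb[rule_format, of "{g0}"] by simp
  also have "\<dots> \<le> absorb p \<nu> {g0} UNIV" by (rule Pt0_absorb_conv(2)) simp
  finally have a0: "0 < absorb p \<nu> {g0} UNIV" using m by simp
  have "d_site p {} g0 * absorb p \<nu> {g0} UNIV \<le> (\<Sum>g\<in>UNIV. d_site p {} g * absorb p \<nu> {g} UNIV)"
    by (rule member_le_sum[where f="\<lambda>g. d_site p {} g * absorb p \<nu> {g} UNIV"])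
       (auto intro!: mult_nonneg_nonneg d_site_nonneg absorb_nonneg)
  moreover have "0 < d_site p {} g0 * absorb p \<nu> {g0} UNIV" using d0 a0 by simp
  ultimately show "0 < \<nu> * (\<Sum>g\<in>UNIV. d_site p {} g * absorb p \<nu> {g} UNIV)" using nu0 by simp
  have "d_site p {} g0 \<le> b_total p {}" unfolding b_total_alt
    by (rule member_le_sum) (auto intro: d_site_nonneg)
  then show "0 < b_total p {}" using d0 by simp
  have "d_site p UNIV g0 \<le> b_total p UNIV" unfolding b_total_alt
    by (rule member_le_sum) (auto intro: d_site_nonneg)
  then show "0 < b_total p UNIV" using d1 by simp
qed

lemma rho_rel:
  "\<nu> * b_total p {} * rho_A p \<nu> = \<nu> * (\<Sum>g\<in>UNIV. d_site p {} g * absorb p \<nu> {g} UNIV)"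
  "(1 - \<nu>) * b_total p UNIV * rho_a p \<nu> = (1 - \<nu>) * (\<Sum>g\<in>UNIV. d_site p UNIV g * absorb p \<nu> (UNIV - {g}) {})"
proof -
  have b0: "b_total p {} \<noteq> 0" "b_total p UNIV \<noteq> 0" using pos_facts by auto
  have "b_total p {} * rho_A p \<nu> = (\<Sum>g\<in>UNIV. d_site p {} g * absorb p \<nu> {g} UNIV)"
    unfolding rho_A_def sum_distrib_left using b0 by (intro sum.cong refl) simp
  then show "\<nu> * b_total p {} * rho_A p \<nu> = \<nu> * (\<Sum>g\<in>UNIV. d_site p {} g * absorb p \<nu> {g} UNIV)"
    by (simp add: mult.assoc)
  have "b_total p UNIV * rho_a p \<nu> = (\<Sum>g\<in>UNIV. d_site p UNIV g * absorb p \<nu> (UNIV - {g}) {})"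
    unfolding rho_a_def sum_distrib_left using b0 by (intro sum.cong refl) simp
  then show "(1 - \<nu>) * b_total p UNIV * rho_a p \<nu> = (1 - \<nu>) * (\<Sum>g\<in>UNIV. d_site p UNIV g * absorb p \<nu> (UNIV - {g}) {})"
    by (simp add: mult.assoc)
qed

lemma main:
  "((\<lambda>u. pi_MSS p u \<nu> x) \<longlongrightarrow>
     (let D = \<nu> * b_total p {} * rho_A p \<nu> + (1 - \<nu>) * b_total p UNIV * rho_a p \<nu>
      in if x = UNIV then \<nu> * b_total p {} * rho_A p \<nu> / D
         else if x = {} then (1 - \<nu>) * b_total p UNIV * rho_a p \<nu> / D
         else 0)) (at_right 0)"
proof -
  define \<alpha> where "\<alpha> = \<nu> * (\<Sum>g\<in>UNIV. d_site p {} g * absorb p \<nu> {g} UNIV)"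
  define \<beta> where "\<beta> = (1 - \<nu>) * (\<Sum>g\<in>UNIV. d_site p UNIV g * absorb p \<nu> (UNIV - {g}) {})"
  have a0: "0 < \<alpha>" unfolding \<alpha>_def by (rule pos_facts)
  have b0: "0 \<le> \<beta>" unfolding \<beta>_def using nu1
    by (intro mult_nonneg_nonneg sum_nonneg d_site_nonneg absorb_nonneg) auto
  have D0: "\<alpha> + \<beta> \<noteq> 0" using a0 b0 by simp
  define \<pi> where "\<pi> u y = pi_MSS p u \<nu> y" for u y
  define STr where "STr u = (\<Sum>y\<in>Tr. \<pi> u y)" for u
  define K where "K = real CARD('g) * real CARD('g set)"
  have STr_lim: "(STr \<longlongrightarrow> 0) (at_right 0)" unfolding STr_def \<pi>_def by (rule trans_vanish)
  have ev: "eventually (\<lambda>u. 0 < u \<and> u \<le> 1) (at_right (0::real))" by (rule ev_u)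
  have pib: "0 \<le> \<pi> u y" "\<pi> u y \<le> 1" "(\<Sum>y\<in>UNIV. \<pi> u y) = 1" if "0 < u" "u \<le> 1" for u y
  proof -
    have st: "stationary p u \<nu> (\<pi> u)" unfolding \<pi>_def using pi_MSS_stationary that by simp
    then have nn': "\<forall>y. 0 \<le> \<pi> u y" and s1: "(\<Sum>y\<in>UNIV. \<pi> u y) = 1" unfolding stationary_def by blast+
    then show "0 \<le> \<pi> u y" by blast
    show "(\<Sum>y\<in>UNIV. \<pi> u y) = 1" by (rule s1)
    have "\<pi> u y \<le> (\<Sum>y\<in>UNIV. \<pi> u y)" using nn' by (intro member_le_sum) auto
    then show "\<pi> u y \<le> 1" using s1 by simp
  qed
  define R where "R u = (\<Sum>x\<in>Tr. \<pi> u x * Hf u x)" for u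
  have R_lim: "(R \<longlongrightarrow> 0) (at_right 0)"
  proof (rule tendsto_0_le[OF STr_lim])
    show "eventually (\<lambda>u. norm (R u) \<le> norm (STr u) * K) (at_right 0)"
      using ev
    proof eventually_elim
      case (elim u)
      have "\<bar>R u\<bar> \<le> (\<Sum>x\<in>Tr. \<bar>\<pi> u x * Hf u x\<bar>)" unfolding R_def by (rule sum_abs)
      also have "\<dots> \<le> (\<Sum>x\<in>Tr. \<pi> u x * K)"
      proof (rule sum_mono)
        fix x
        show "\<bar>\<pi> u x * Hf u x\<bar> \<le> \<pi> u x * K"
          using pib(1)[OF elim[THEN conjunct1] elim[THEN conjunct2], of x] H_bound[of u x] elim
          by (simp add: abs_mult K_def mult_left_mono)
      qed
      also have "\<dots> = STr u * K" unfolding STr_def by (simp add: sum_distrib_right)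
      also have "\<dots> \<le> norm (STr u) * K" unfolding K_def by (intro mult_right_mono) auto
      finally show ?case by simp
    qed
  qed
  define X where "X u = \<pi> u {} * Hf u {} + \<pi> u UNIV * Hf u UNIV" for u
  have X_lim: "(X \<longlongrightarrow> 0) (at_right 0)"
  proof -
    have "((\<lambda>u. - R u) \<longlongrightarrow> 0) (at_right 0)" using tendsto_minus[OF R_lim] by simp
    moreover have "eventually (\<lambda>u. - R u = X u) (at_right 0)"
      using ev
    proof eventually_elim
      case (elim u)
      have "(\<Sum>x\<in>UNIV. \<pi> u x * Hf u x) = 0" unfolding \<pi>_def using key_identity elim by simp
      then show ?case unfolding sum_split R_def X_def by linarith
    qed
    ultimately show ?thesis by (rule Lim_transform_eventually)
  qed
  have Y1: "((\<lambda>u. \<pi> u {} * (Hf u {} - \<alpha>)) \<longlongrightarrow> 0) (at_right 0)"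
  proof (rule tendsto_0_le[where K=1])
    show "((\<lambda>u. Hf u {} - \<alpha>) \<longlongrightarrow> 0) (at_right 0)"
      using tendsto_diff[OF H_a_lim tendsto_const[of \<alpha>]] unfolding \<alpha>_def by simp
    show "eventually (\<lambda>u. norm (\<pi> u {} * (Hf u {} - \<alpha>)) \<le> norm (Hf u {} - \<alpha>) * 1) (at_right 0)"
      using ev by eventually_elim (use pib in \<open>auto simp: abs_mult intro: mult_left_le_one_le\<close>)
  qed
  have Y2: "((\<lambda>u. \<pi> u UNIV * (Hf u UNIV + \<beta>)) \<longlongrightarrow> 0) (at_right 0)"
  proof (rule tendsto_0_le[where K=1])
    show "((\<lambda>u. Hf u UNIV + \<beta>) \<longlongrightarrow> 0) (at_right 0)"
      using tendsto_add[OF H_A_lim tendsto_const[of \<beta>]] unfolding \<beta>_def by simp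
    show "eventually (\<lambda>u. norm (\<pi> u UNIV * (Hf u UNIV + \<beta>)) \<le> norm (Hf u UNIV + \<beta>) * 1) (at_right 0)"
      using ev by eventually_elim (use pib in \<open>auto simp: abs_mult intro: mult_left_le_one_le\<close>)
  qed
  define Er where "Er u = \<pi> u {} * \<alpha> - \<pi> u UNIV * \<beta>" for u
  have Er_lim: "(Er \<longlongrightarrow> 0) (at_right 0)"
  proof -
    have "((\<lambda>u. X u - \<pi> u {} * (Hf u {} - \<alpha>) - \<pi> u UNIV * (Hf u UNIV + \<beta>)) \<longlongrightarrow> 0 - 0 - 0) (at_right 0)"
      by (intro tendsto_diff X_lim Y1 Y2)
    moreover have "X u - \<pi> u {} * (Hf u {} - \<alpha>) - \<pi> u UNIV * (Hf u UNIV + \<beta>) = Er u" for u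
      unfolding X_def Er_def by (simp add: algebra_simps)
    ultimately show ?thesis by simp
  qed
  define S where "S u = \<pi> u {} + \<pi> u UNIV" for u
  have S_lim: "(S \<longlongrightarrow> 1) (at_right 0)"
  proof -
    have "((\<lambda>u. 1 - STr u) \<longlongrightarrow> 1) (at_right 0)" using tendsto_diff[OF tendsto_const STr_lim, of 1] by simp
    moreover have "eventually (\<lambda>u. 1 - STr u = S u) (at_right 0)"
      using ev
    proof eventually_elim
      case (elim u)
      have "(\<Sum>y\<in>UNIV. \<pi> u y) = 1" using pib elim by auto
      then show ?case unfolding sum_split STr_def S_def by linarith
    qed
    ultimately show ?thesis by (rule Lim_transform_eventually)
  qed
  have pa: "((\<lambda>u. \<pi> u {}) \<longlongrightarrow> \<beta> / (\<alpha> + \<beta>)) (at_right 0)"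
  proof -
    have "((\<lambda>u. (Er u + \<beta> * S u) / (\<alpha> + \<beta>)) \<longlongrightarrow> (0 + \<beta> * 1) / (\<alpha> + \<beta>)) (at_right 0)"
      by (intro tendsto_intros Er_lim S_lim D0)
    moreover have "(Er u + \<beta> * S u) / (\<alpha> + \<beta>) = \<pi> u {}" for u
      unfolding Er_def S_def using D0 by (simp add: field_simps)
    ultimately show ?thesis by simp
  qed
  have pA: "((\<lambda>u. \<pi> u UNIV) \<longlongrightarrow> \<alpha> / (\<alpha> + \<beta>)) (at_right 0)"
  proof -
    have "((\<lambda>u. S u - \<pi> u {}) \<longlongrightarrow> 1 - \<beta> / (\<alpha> + \<beta>)) (at_right 0)"
      by (intro tendsto_intros S_lim pa)
    moreover have "1 - \<beta> / (\<alpha> + \<beta>) = \<alpha> / (\<alpha> + \<beta>)" using D0 by (simp add: field_simps)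
    ultimately show ?thesis by (simp add: S_def)
  qed
  have pT: "((\<lambda>u. \<pi> u x) \<longlongrightarrow> 0) (at_right 0)" if "x \<in> Tr"
  proof (rule tendsto_sandwich[of "\<lambda>_. 0" _ _ STr])
    show "eventually (\<lambda>u. 0 \<le> \<pi> u x) (at_right 0)" using ev by eventually_elim (use pib in auto)
    show "eventually (\<lambda>u. \<pi> u x \<le> STr u) (at_right 0)" using ev
    proof eventually_elim
      case (elim u)
      show ?case unfolding STr_def using that pib(1) elim by (intro member_le_sum) auto
    qed
  qed (auto intro: STr_lim)
  have lhs: "(\<lambda>u. pi_MSS p u \<nu> x) = (\<lambda>u. \<pi> u x)" by (simp add: \<pi>_def)
  show ?thesis
    unfolding lhs rho_rel \<alpha>_def[symmetric] \<beta>_def[symmetric] Let_def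
  proof -
    show "((\<lambda>u. \<pi> u x) \<longlongrightarrow> (if x = UNIV then \<alpha> / (\<alpha> + \<beta>) else if x = {} then \<beta> / (\<alpha> + \<beta>) else 0)) (at_right 0)"
    proof (cases "x = UNIV")
      case True then show ?thesis using pA by simp
    next
      case F1: False
      show ?thesis
      proof (cases "x = {}")
        case True then show ?thesis using pa F1 by simp
      next
        case False
        then have "x \<in> Tr" using F1 by (simp add: Tr_def)
        then show ?thesis using pT F1 False by simp
      qed
    qed
  qed
qed

end

theorem theorem1:
  fixes p :: "'g::finite state \<Rightarrow> 'g event \<Rightarrow> real" and \<nu> :: real and x :: "'g state"
  assumes "replacement_rule p" and "fixation_axiom p" and "0 < \<nu>" and "\<nu> < 1"
  shows "((\<lambda>u. pi_MSS p u \<nu> x) \<longlongrightarrow>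
     (let D = \<nu> * b_total p {} * rho_A p \<nu> + (1 - \<nu>) * b_total p UNIV * rho_a p \<nu>
      in if x = UNIV then \<nu> * b_total p {} * rho_A p \<nu> / D
         else if x = {} then (1 - \<nu>) * b_total p UNIV * rho_a p \<nu> / D
         else 0)) (at_right 0)"
proof -
  interpret fchain p \<nu>
    by unfold_locales (use assms in auto)
  show ?thesis by (rule main)
qed


end
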